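(* Let $N\ge 2$ and $d\ge 1$ be integers, $[N]=\{1,\dots,N\}$, and let $0\le\sigma\le\tau$. Let $\psi:[0,\infty)\to[0,\infty)$ be continuous, nonincreasing, with $\psi(s)>0$ for all $s\ge 0$ and $\sup_{s\ge0}\psi(s)\le 1$. Let $x_i^0\in C([-\tau,0],\mathbb{R}^d)$, $i\in[N]$, and let $\{x_i\}_{i\in[N]}$ be the global solution of \[ \dot x_i(t)=\sum_{j\ne i} a_{ij}(t)\big(x_j(t-\tau)-x_i(t-\sigma)\big),\quad t>0,\qquad a_{ij}(t)=\frac{1}{N-1}\psi\big(|x_i(t-\sigma)-x_j(t-\tau)|\big), \] with $x_i(t)=x_i^0(t)$ for $t\in[-\tau,0]$. Let $K$ be the smallest integer with $K\sigma\ge 2\tau$, i.e. $K=\lceil 2\tau/\sigma\rceil$. Assume there exists $\beta>0$ such that \[ 4\tau\le \beta\left(2e^{-2\tau}-1\right) \] and \[ 4\tau+\beta(1-e^{-2\tau})<\psi\Big(\big(1+\tau-\sigma+\beta^{-1}e^{2\tau}\big)\,\mathcal{Z}^K_\sigma\,\Delta^0_x\Big), \] where $\mathcal{Z}^K_\sigma:=Z^K_\sigma+Z^{K-1}_\sigma\,\beta\big(1-(1+2\tau)e^{-2\tau}\big)$. Then the solution reaches asymptotic consensus, i.e. $\lim_{t\to\infty}d_x(t)=0$, and the diameter $d_x(t)$ decays exponentially in time.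
   Context: $d_x(t):=\max_{i,j\in[N]}|x_i(t)-x_j(t)|$ for $t\ge 0$. $\Delta^0_x:=\max_{i,j\in[N]}\max_{s,t\in[-\tau,0]}|x_i^0(s)-x_j^0(t)|$. For $k\in\mathbb{N}\cup\{0\}$, \[ Z^k_\sigma:=\frac{1}{2\sqrt{\sigma(1+\sigma)}}\Big[\big((1+\sigma)+\sqrt{\sigma(1+\sigma)}\big)^{k+1}-\big((1+\sigma)-\sqrt{\sigma(1+\sigma)}\big)^{k+1}\Big], \] which is a polynomial in $\sigma$; equivalently $Z^0_\sigma=1$ and $Z^k_\sigma=1+(1+\sigma)Z^{k-1}_\sigma+\sigma\sum_{m=0}^{k-1}Z^m_\sigma$ for $k\ge1$. The global solution $x_i$ is continuous on $[-\tau,\infty)$ and continuously differentiable on $[0,\infty)$ (one-sided at $0$). "Decays exponentially" means there exist constants $A,\Gamma>0$ with $d_x(t)\le Ae^{-\Gamma t}$ for all $t\ge 0$. *)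

theory Defs
  imports "HOL-Analysis.Analysis"
begin

function Zs :: "real \<Rightarrow> nat \<Rightarrow> real" where
  "Zs \<sigma> k = (if k = 0 then 1
     else 1 + (1 + \<sigma>) * Zs \<sigma> (k - 1) + \<sigma> * (\<Sum>m<k. Zs \<sigma> m))"
  by auto
termination by (relation "Wellfounded.measure snd") auto

definition diam :: "nat \<Rightarrow> (nat \<Rightarrow> real \<Rightarrow> real^'d) \<Rightarrow> real \<Rightarrow> real" where
  "diam N x t = Max {norm (x i t - x j t) | i j. i < N \<and> j < N}"

definition Delta0 :: "nat \<Rightarrow> real \<Rightarrow> (nat \<Rightarrow> real \<Rightarrow> real^'d) \<Rightarrow> real" where
  "Delta0 N \<tau> x = Sup {norm (x i s - x j t) | i j s t.
      i < N \<and> j < N \<and> s \<in> {-\<tau>..0} \<and> t \<in> {-\<tau>..0}}"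

end

theory Submission
  imports Defs "HOL-Real_Asymp.Real_Asymp"
begin

lemma mvt_bound:
  fixes f :: "real \<Rightarrow> 'a::real_inner"
  assumes ab: "a \<le> b" and cf: "continuous_on {a..b} f"
    and df: "\<And>s. a < s \<Longrightarrow> s < b \<Longrightarrow> (f has_vector_derivative f' s) (at s)"
    and bd: "\<And>s. a < s \<Longrightarrow> s < b \<Longrightarrow> norm (f' s) \<le> M"
  shows "norm (f b - f a) \<le> M * (b - a)"
proof (cases "a = b")
  case True then show ?thesis by simp
next
  case False
  then have "a < b" using ab by simp
  from mvt_general[OF this cf, of "\<lambda>s h. h *\<^sub>R f' s"] df
  obtain s where s: "s \<in> {a<..<b}" "norm (f b - f a) \<le> norm ((b - a) *\<^sub>R f' s)"
    unfolding has_vector_derivative_def by blast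
  have "norm ((b - a) *\<^sub>R f' s) = (b - a) * norm (f' s)" using ab by simp
  also have "\<dots> \<le> (b - a) * M" using bd[of s] s(1) ab by (intro mult_left_mono) auto
  finally show ?thesis using s(2) by (simp add: mult.commute)
qed

declare Zs.simps[simp del]

lemma Zs_ge: "0 \<le> \<sigma> \<Longrightarrow> Zs \<sigma> k \<ge> real k + 1"
proof (induction k rule: less_induct)
  case (less k)
  show ?case
  proof (cases "k = 0")
    case True then show ?thesis by (simp add: Zs.simps)
  next
    case False
    have ih: "Zs \<sigma> (k-1) \<ge> real (k-1) + 1" using less.IH[of "k-1"] less.prems False by simp
    have s: "(\<Sum>m<k. Zs \<sigma> m) \<ge> 0"
    proof (intro sum_nonneg)
      fix m assume "m \<in> {..<k}"
      then have "real m + 1 \<le> Zs \<sigma> m" using less by simp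
      then show "0 \<le> Zs \<sigma> m" by linarith
    qed
    have "Zs \<sigma> k = 1 + (1 + \<sigma>) * Zs \<sigma> (k - 1) + \<sigma> * (\<Sum>m<k. Zs \<sigma> m)"
      using False by (subst Zs.simps) simp
    moreover have "(1 + \<sigma>) * Zs \<sigma> (k - 1) \<ge> Zs \<sigma> (k-1)" using ih less.prems
    proof -
      have "\<sigma> * Zs \<sigma> (k-1) \<ge> 0" using ih less.prems by (intro mult_nonneg_nonneg) auto
      then show ?thesis by (simp add: algebra_simps)
    qed
    moreover have "\<sigma> * (\<Sum>m<k. Zs \<sigma> m) \<ge> 0" using s less.prems by simp
    moreover have "real (k-1) + 1 = real k" using False by simp
    ultimately show ?thesis using ih by linarith
  qed
qed

lemma gamma_exists:
  fixes \<tau> c P B \<Delta> :: real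
  assumes "\<tau> \<ge> 0" "1 + \<tau>*c < c" "4*\<tau>*c < P" "\<Delta> < B*(1 - 2*\<tau>*c)"
  shows "\<exists>\<gamma>>0. 4*\<tau>*c*exp(\<gamma>*\<tau>) + \<gamma> < P \<and> (1+\<tau>*c)*exp(\<gamma>*\<tau>) < c
           \<and> \<Delta> < B*(exp(-\<gamma>*\<tau>) - 2*\<tau>*c)"
proof -
  have l1: "((\<lambda>\<gamma>. 4*\<tau>*c*exp(\<gamma>*\<tau>) + \<gamma>) \<longlongrightarrow> 4*\<tau>*c*exp(0*\<tau>) + 0) (at_right 0)"
    by (intro tendsto_intros)
  have l2: "((\<lambda>\<gamma>. (1+\<tau>*c)*exp(\<gamma>*\<tau>)) \<longlongrightarrow> (1+\<tau>*c)*exp(0*\<tau>)) (at_right 0)"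
    by (intro tendsto_intros)
  have l3: "((\<lambda>\<gamma>. B*(exp(-\<gamma>*\<tau>) - 2*\<tau>*c)) \<longlongrightarrow> B*(exp(-0*\<tau>) - 2*\<tau>*c)) (at_right 0)"
    by (intro tendsto_intros)
  have e1: "eventually (\<lambda>\<gamma>. 4*\<tau>*c*exp(\<gamma>*\<tau>) + \<gamma> < P) (at_right 0)"
    using order_tendstoD(2)[OF l1] assms by simp
  have e2: "eventually (\<lambda>\<gamma>. (1+\<tau>*c)*exp(\<gamma>*\<tau>) < c) (at_right 0)"
    using order_tendstoD(2)[OF l2] assms by simp
  have e3: "eventually (\<lambda>\<gamma>. \<Delta> < B*(exp(-\<gamma>*\<tau>) - 2*\<tau>*c)) (at_right 0)"
    using order_tendstoD(1)[OF l3] assms by simp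
  have "eventually (\<lambda>\<gamma>. 4*\<tau>*c*exp(\<gamma>*\<tau>) + \<gamma> < P \<and> (1+\<tau>*c)*exp(\<gamma>*\<tau>) < c
           \<and> \<Delta> < B*(exp(-\<gamma>*\<tau>) - 2*\<tau>*c)) (at_right (0::real))"
    using e1 e2 e3 by eventually_elim auto
  then obtain b where "b > 0" and hb: "\<forall>y>0. y < b \<longrightarrow> 4*\<tau>*c*exp(y*\<tau>) + y < P \<and> (1+\<tau>*c)*exp(y*\<tau>) < c
           \<and> \<Delta> < B*(exp(-y*\<tau>) - 2*\<tau>*c)"
    unfolding eventually_at_right_field by auto
  then have "4*\<tau>*c*exp((b/2)*\<tau>) + (b/2) < P \<and> (1+\<tau>*c)*exp((b/2)*\<tau>) < c
           \<and> \<Delta> < B*(exp(-(b/2)*\<tau>) - 2*\<tau>*c)" using hb \<open>b > 0\<close> by (metis half_gt_zero field_sum_of_halves less_add_same_cancel1)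
  then show ?thesis using \<open>b > 0\<close> by (intro exI[of _ "b/2"]) simp
qed

lemma choose_c:
  fixes \<tau> \<sigma> \<beta> P R \<Delta> :: real
  assumes "0 \<le> \<tau>" "\<beta> > 0" "4 * \<tau> \<le> \<beta> * (2 * exp (-2 * \<tau>) - 1)"
    "4 * \<tau> + \<beta> * (1 - exp (-2 * \<tau>)) < P" "P \<le> 1" "0 \<le> \<Delta>" "\<Delta> \<le> R" "\<tau> > 0 \<Longrightarrow> 3*\<Delta> \<le> R"
  shows "\<exists>c. 1 < c \<and> 1 + \<tau>*c < c \<and> 4*\<tau>*c < P \<and> 2*\<tau>*c < 1 \<and> \<Delta>*(1+\<tau>*c) \<le> R*(1-2*\<tau>*c)"
proof (cases "\<tau> = 0")
  case True
  then show ?thesis using assms by (intro exI[of _ 2]) auto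
next
  case False
  then have tp: "\<tau> > 0" using assms by simp
  define u where "u = exp (-2*\<tau>)"
  have u0: "u > 0" unfolding u_def by simp
  have "exp (2*\<tau>) \<ge> 1 + 2*\<tau>" by (rule exp_ge_add_one_self)
  moreover have "exp (2*\<tau>) * u = 1" unfolding u_def by (simp add: exp_minus_inverse[symmetric] exp_add[symmetric])
  ultimately have uu: "u * (1 + 2*\<tau>) \<le> 1" using u0 mult_left_mono[of "1 + 2*\<tau>" "exp (2*\<tau>)" u]
    by (simp add: mult.commute)
  have h1: "4*\<tau> \<le> \<beta>*(2*u-1)" using assms(3) unfolding u_def by simp
  have h2: "4*\<tau> + \<beta>*(1-u) < P" using assms(4) unfolding u_def by simp
  have pos: "2*u - 1 > 0"
  proof (rule ccontr)
    assume "\<not> 2*u - 1 > 0"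
    then have "\<beta>*(2*u-1) \<le> 0" using assms(2) by (intro mult_nonneg_nonpos) auto
    then show False using h1 tp by simp
  qed
  have bb: "\<beta> \<ge> 4*\<tau>/(2*u-1)" using h1 pos by (simp add: field_simps)
  have "u * (2*\<tau>) \<ge> 0" using tp u0 by simp
  then have "1 - u \<ge> 0" using uu by (simp add: algebra_simps)
  then have "P > 4*\<tau> + 4*\<tau>/(2*u-1)*(1-u)" using h2 bb
    using mult_right_mono[OF bb \<open>1 - u \<ge> 0\<close>] by linarith
  also have "4*\<tau> + 4*\<tau>/(2*u-1)*(1-u) = 4*\<tau>*u/(2*u-1)" using pos by (simp add: field_simps)
  finally have Pu: "P*(2*u-1) > 4*\<tau>*u" using pos by (simp add: field_simps)
  have key: "4*\<tau> < P*(1-2*\<tau>)"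
  proof -
    have "4*\<tau>*u < P*(2*u-1)" using Pu by simp
    have "P*(2*u-1) \<le> P*(u*(1-2*\<tau>))"
    proof (rule mult_left_mono)
      show "2*u - 1 \<le> u*(1-2*\<tau>)" using uu by (simp add: algebra_simps)
      have "\<beta>*(1-u) \<ge> 0" using assms(2) \<open>1 - u \<ge> 0\<close> by simp
      then show "0 \<le> P" using h2 tp by linarith
    qed
    then have "4*\<tau>*u < u*(P*(1-2*\<tau>))" using Pu by (simp add: algebra_simps)
    then have "u*(4*\<tau>) < u*(P*(1-2*\<tau>))" by (simp add: algebra_simps)
    then show ?thesis using u0 mult_less_cancel_left_pos by blast
  qed
  have "\<beta>*(1-u) \<ge> 0" using assms(2) \<open>1 - u \<ge> 0\<close> by simp
  then have P0: "P \<ge> 0" using h2 tp by linarith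
  have t6: "6*\<tau> < 1"
  proof (cases "1 - 2*\<tau> \<ge> 0")
    case True
    then have "P*(1-2*\<tau>) \<le> 1*(1-2*\<tau>)" using assms(5) by (intro mult_right_mono) auto
    then show ?thesis using key by simp
  next
    case False
    then have "P*(1-2*\<tau>) \<le> 0" using P0 by (intro mult_nonneg_nonpos) auto
    then show ?thesis using key tp by simp
  qed
  define c where "c = 1/(1-2*\<tau>)"
  have d: "1 - 2*\<tau> > 0" using t6 by simp
  show ?thesis
  proof (intro exI[of _ c] conjI)
    show "1 < c" unfolding c_def using d tp by (simp add: field_simps)
    show "1 + \<tau>*c < c" unfolding c_def using d tp by (simp add: field_simps)
    show "4*\<tau>*c < P" unfolding c_def using d key by (simp add: field_simps)
    show "2*\<tau>*c < 1" unfolding c_def using d t6 by (simp add: field_simps)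
    have "\<Delta>*(2 - 11*\<tau>) \<ge> 0" using assms(6) t6 by (intro mult_nonneg_nonneg) auto
    then have "\<Delta>*(1-\<tau>) \<le> (3*\<Delta>)*(1-4*\<tau>)" by (simp add: algebra_simps)
    also have "\<dots> \<le> R*(1-4*\<tau>)" using assms(8) tp t6 by (intro mult_right_mono) auto
    finally have "\<Delta>*(1-\<tau>) \<le> R*(1-4*\<tau>)" .
    then have "\<Delta>*(1-\<tau>)/(1-2*\<tau>) \<le> R*(1-4*\<tau>)/(1-2*\<tau>)" using d by (intro divide_right_mono) auto
    moreover have "1+\<tau>*c = (1-\<tau>)/(1-2*\<tau>)" unfolding c_def using d by (simp add: field_simps)
    moreover have "1-2*\<tau>*c = (1-4*\<tau>)/(1-2*\<tau>)" unfolding c_def using d by (simp add: field_simps)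
    ultimately show "\<Delta>*(1+\<tau>*c) \<le> R*(1-2*\<tau>*c)" by simp
  qed
qed



lemma speed_bound:
  fixes x :: "nat \<Rightarrow> real \<Rightarrow> real^'d" and \<psi> :: "real \<Rightarrow> real"
  assumes N: "N \<ge> 2" and j: "j < N"
    and psi0: "\<And>s. 0 \<le> s \<Longrightarrow> \<psi> s \<ge> 0" and psi1: "\<And>s. 0 \<le> s \<Longrightarrow> \<psi> s \<le> 1"
    and M: "M \<ge> 0" "\<And>l. l < N \<Longrightarrow> norm (x l (t - \<tau>) - x j (t - \<sigma>)) \<le> M"
  shows "norm (\<Sum>l\<in>{..<N} - {j}. (\<psi> (norm (x j (t - \<sigma>) - x l (t - \<tau>))) / (real N - 1))
               *\<^sub>R (x l (t - \<tau>) - x j (t - \<sigma>))) \<le> M"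
proof -
  have N1: "real N - 1 > 0" using N by simp
  have "norm (\<Sum>l\<in>{..<N} - {j}. (\<psi> (norm (x j (t - \<sigma>) - x l (t - \<tau>))) / (real N - 1))
               *\<^sub>R (x l (t - \<tau>) - x j (t - \<sigma>)))
     \<le> (\<Sum>l\<in>{..<N} - {j}. norm ((\<psi> (norm (x j (t - \<sigma>) - x l (t - \<tau>))) / (real N - 1))
               *\<^sub>R (x l (t - \<tau>) - x j (t - \<sigma>))))" by (rule norm_sum)
  also have "\<dots> \<le> (\<Sum>l\<in>{..<N} - {j}. M / (real N - 1))"
  proof (rule sum_mono)
    fix l assume l: "l \<in> {..<N} - {j}"
    let ?p = "\<psi> (norm (x j (t - \<sigma>) - x l (t - \<tau>)))"
    have p: "0 \<le> ?p" "?p \<le> 1" using psi0 psi1 by auto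
    have "norm ((?p / (real N - 1)) *\<^sub>R (x l (t - \<tau>) - x j (t - \<sigma>)))
        = (?p / (real N - 1)) * norm (x l (t - \<tau>) - x j (t - \<sigma>))" using p N1 by simp
    also have "\<dots> \<le> (1 / (real N - 1)) * M"
      using p N1 M l by (intro mult_mono divide_right_mono) auto
    finally show "norm ((?p / (real N - 1)) *\<^sub>R (x l (t - \<tau>) - x j (t - \<sigma>))) \<le> M / (real N - 1)" by simp
  qed
  also have "\<dots> = M" using j N1 by (simp add: card_Diff_singleton of_nat_diff)
  finally show ?thesis .
qed


theorem theorem1p1:
  fixes N K :: nat and \<sigma> \<tau> \<beta> :: real and \<psi> :: "real \<Rightarrow> real"
    and x :: "nat \<Rightarrow> real \<Rightarrow> real^'d"
  assumes N: "N \<ge> 2"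
    and st: "0 \<le> \<sigma>" "\<sigma> \<le> \<tau>"
    and psi_cont: "continuous_on {0..} \<psi>"
    and psi_mono: "\<And>s t. 0 \<le> s \<Longrightarrow> s \<le> t \<Longrightarrow> \<psi> t \<le> \<psi> s"
    and psi_pos: "\<And>s. 0 \<le> s \<Longrightarrow> \<psi> s > 0"
    and psi_le1: "\<And>s. 0 \<le> s \<Longrightarrow> \<psi> s \<le> 1"
    and x_cont: "\<And>i. i < N \<Longrightarrow> continuous_on {-\<tau>..} (x i)"
    and x_ode: "\<And>i t. i < N \<Longrightarrow> t > 0 \<Longrightarrow>
       (x i has_vector_derivative
          (\<Sum>j\<in>{..<N} - {i}.
             (\<psi> (norm (x i (t - \<sigma>) - x j (t - \<tau>))) / (real N - 1))
               *\<^sub>R (x j (t - \<tau>) - x i (t - \<sigma>)))) (at t)"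
    and K: "real K * \<sigma> \<ge> 2 * \<tau>" "\<And>k. k < K \<Longrightarrow> real k * \<sigma> < 2 * \<tau>"
    and beta: "\<beta> > 0"
    and h1: "4 * \<tau> \<le> \<beta> * (2 * exp (-2 * \<tau>) - 1)"
    and h2: "4 * \<tau> + \<beta> * (1 - exp (-2 * \<tau>)) <
       \<psi> ((1 + \<tau> - \<sigma> + exp (2 * \<tau>) / \<beta>)
           * (Zs \<sigma> K + Zs \<sigma> (K - 1) * \<beta> * (1 - (1 + 2 * \<tau>) * exp (-2 * \<tau>)))
           * Delta0 N \<tau> x)"
  shows "(diam N x \<longlongrightarrow> 0) at_top \<and>
         (\<exists>A \<Gamma>. A > 0 \<and> \<Gamma> > 0 \<and> (\<forall>t\<ge>0. diam N x t \<le> A * exp (- \<Gamma> * t)))"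
proof -
  have tau0: "\<tau> \<ge> 0" using st by simp
  have N1: "real N - 1 > 0" using N by simp
  define F where "F = (\<lambda>i t. (\<Sum>j\<in>{..<N} - {i}.
             (\<psi> (norm (x i (t - \<sigma>) - x j (t - \<tau>))) / (real N - 1))
               *\<^sub>R (x j (t - \<tau>) - x i (t - \<sigma>))))"
  have der: "\<And>i t. i < N \<Longrightarrow> t > 0 \<Longrightarrow> (x i has_vector_derivative F i t) (at t)"
    using x_ode unfolding F_def by simp
  have psi0: "\<And>s. 0 \<le> s \<Longrightarrow> \<psi> s \<ge> 0" using psi_pos less_imp_le by blast
  have Fbound: "\<And>j t M. j < N \<Longrightarrow> M \<ge> 0 \<Longrightarrow> (\<And>l. l < N \<Longrightarrow> norm (x l (t - \<tau>) - x j (t - \<sigma>)) \<le> M)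
      \<Longrightarrow> norm (F j t) \<le> M"
    unfolding F_def by (rule speed_bound[OF N _ psi0 psi_le1]) auto
  define \<Delta> where "\<Delta> = Delta0 N \<tau> x"
  have hD: "\<And>i j s s'. i < N \<Longrightarrow> j < N \<Longrightarrow> s \<in> {-\<tau>..0} \<Longrightarrow> s' \<in> {-\<tau>..0} \<Longrightarrow>
      norm (x i s - x j s') \<le> \<Delta>"
  proof -
    have "compact (\<Union>i<N. x i ` {-\<tau>..0})"
    proof (intro compact_UN)
      fix i assume "i \<in> {..<N}"
      then have "continuous_on {-\<tau>..0} (x i)" by (intro continuous_on_subset[OF x_cont]) auto
      then show "compact (x i ` {-\<tau>..0})" by (intro compact_continuous_image) auto
    qed auto
    then obtain M where M: "\<And>y. y \<in> (\<Union>i<N. x i ` {-\<tau>..0}) \<Longrightarrow> norm y \<le> M"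
      using compact_imp_bounded bounded_iff by metis
    have bdd: "bdd_above {norm (x i s - x j t) | i j s t.
      i < N \<and> j < N \<and> s \<in> {-\<tau>..0} \<and> t \<in> {-\<tau>..0}}"
    proof (rule bdd_aboveI)
      fix z assume "z \<in> {norm (x i s - x j t) | i j s t.
        i < N \<and> j < N \<and> s \<in> {-\<tau>..0} \<and> t \<in> {-\<tau>..0}}"
      then obtain i j s t where z: "z = norm (x i s - x j t)" "i < N" "j < N" "s \<in> {-\<tau>..0}" "t \<in> {-\<tau>..0}"
        by blast
      have "norm (x i s) \<le> M" using z by (intro M) blast
      moreover have "norm (x j t) \<le> M" using z by (intro M) blast
      ultimately
      show "z \<le> 2 * M" using z norm_triangle_ineq4[of "x i s" "x j t"] by simp
    qed
    fix i j s s' assume "i < N" "j < N" "s \<in> {-\<tau>..0}" "s' \<in> {-\<tau>..0}"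
    then show "norm (x i s - x j s') \<le> \<Delta>" unfolding \<Delta>_def Delta0_def
      by (intro cSup_upper[OF _ bdd]) blast
  qed
  have D0: "\<Delta> \<ge> 0" using hD[of 0 0 0 0] N tau0 by simp
  define R where "R = (1 + \<tau> - \<sigma> + exp (2 * \<tau>) / \<beta>)
           * (Zs \<sigma> K + Zs \<sigma> (K - 1) * \<beta> * (1 - (1 + 2 * \<tau>) * exp (-2 * \<tau>)))
           * Delta0 N \<tau> x"
  have RZ: "R \<ge> Zs \<sigma> K * \<Delta>"
  proof -
    have e: "exp (2*\<tau>) \<ge> 1 + 2*\<tau>" by (rule exp_ge_add_one_self)
    have "(1 + 2 * \<tau>) * exp (-2 * \<tau>) = (1 + 2*\<tau>) / exp (2*\<tau>)" by (simp add: exp_minus field_simps)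
    also have "\<dots> \<le> 1" using e by simp
    finally have w: "1 - (1 + 2 * \<tau>) * exp (-2 * \<tau>) \<ge> 0" by simp
    have z1: "Zs \<sigma> (K-1) \<ge> 0" using Zs_ge[OF st(1), of "K-1"] by linarith
    have zK: "Zs \<sigma> K \<ge> 0" using Zs_ge[OF st(1), of "K"] by linarith
    have a1: "1 + \<tau> - \<sigma> + exp (2 * \<tau>) / \<beta> \<ge> 1" using st beta
      by (smt (verit) divide_pos_pos exp_gt_zero)
    have z2: "Zs \<sigma> K + Zs \<sigma> (K - 1) * \<beta> * (1 - (1 + 2 * \<tau>) * exp (-2 * \<tau>)) \<ge> Zs \<sigma> K"
      using z1 beta w by simp
    have "Zs \<sigma> K \<le> (1 + \<tau> - \<sigma> + exp (2 * \<tau>) / \<beta>)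
           * (Zs \<sigma> K + Zs \<sigma> (K - 1) * \<beta> * (1 - (1 + 2 * \<tau>) * exp (-2 * \<tau>)))"
      using a1 z2 zK by (smt (verit) mult_mono mult_cancel_right1)
    then show ?thesis unfolding R_def \<Delta>_def using D0 \<Delta>_def by (intro mult_right_mono) auto
  qed
  have RD: "\<Delta> \<le> R"
  proof -
    have "1 \<le> Zs \<sigma> K" using Zs_ge[OF st(1), of K] by simp
    then have "1 * \<Delta> \<le> Zs \<sigma> K * \<Delta>" using D0 by (intro mult_right_mono) auto
    then show ?thesis using RZ by simp
  qed
  have RD3: "3 * \<Delta> \<le> R" if tp: "\<tau> > 0"
  proof -
    have "K \<ge> 2"
    proof (rule ccontr)
      assume "\<not> K \<ge> 2"
      then have "real K \<le> 1" by simp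
      then have "real K * \<sigma> \<le> 1 * \<sigma>" using st by (intro mult_right_mono) auto
      then show False using K(1) st tp by simp
    qed
    then have "Zs \<sigma> K \<ge> 3" using Zs_ge[OF st(1), of K] by simp
    then have "3 * \<Delta> \<le> Zs \<sigma> K * \<Delta>" using D0 by (intro mult_right_mono) auto
    then show ?thesis using RZ by simp
  qed
  have R0: "R \<ge> 0" using RD D0 by simp
  have hP: "4 * \<tau> + \<beta> * (1 - exp (-2 * \<tau>)) < \<psi> R" using h2 unfolding R_def .
  obtain c where c: "1 < c" "1 + \<tau>*c < c" "4*\<tau>*c < \<psi> R" "2*\<tau>*c < 1"
     "\<Delta>*(1+\<tau>*c) \<le> R*(1-2*\<tau>*c)"
    using choose_c[OF tau0 beta h1 hP psi_le1[OF R0] D0 RD RD3] by blast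
  obtain \<epsilon> where eps: "\<epsilon> > 0" "4*\<tau>*c < \<psi> (R + \<epsilon>)"
  proof -
    have "(\<psi> \<longlongrightarrow> \<psi> R) (at R within {0..})" using psi_cont R0 continuous_on_def by blast
    then have "(\<psi> \<longlongrightarrow> \<psi> R) (at_right R)"
      by (rule tendsto_within_subset) (use R0 in auto)
    then have "eventually (\<lambda>y. 4*\<tau>*c < \<psi> y) (at_right R)" using order_tendstoD(1) c(3) by blast
    then obtain b where b: "b > R" "\<forall>y>R. y < b \<longrightarrow> 4*\<tau>*c < \<psi> y"
      unfolding eventually_at_right_field by blast
    have "R + (b - R)/2 > R" "R + (b - R)/2 < b" using b(1) by (auto simp: field_simps)
    then have "4*\<tau>*c < \<psi> (R + (b - R)/2)" using b(2) by blast
    then show ?thesis using b by (intro that[of "(b - R)/2"]) auto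
  qed
  define P' where "P' = \<psi> (R + \<epsilon>)"
  define B where "B = (R + \<epsilon>) / (1 + \<tau>*c)"
  have c0: "c > 0" using c by simp
  have tc0: "\<tau>*c \<ge> 0" using tau0 c0 by simp
  have Bpos: "B > 0" unfolding B_def using R0 eps tc0 by simp
  have BR: "B * (1 + \<tau>*c) = R + \<epsilon>" unfolding B_def using tc0 by simp
  have DB: "\<Delta> < B * (1 - 2*\<tau>*c)"
  proof -
    have "\<Delta>*(1+\<tau>*c) < (R+\<epsilon>)*(1-2*\<tau>*c)" using c(4,5) eps(1)
      by (smt (verit) mult_strict_right_mono)
    also have "(R+\<epsilon>)*(1-2*\<tau>*c) = B*(1-2*\<tau>*c)*(1+\<tau>*c)" unfolding BR[symmetric] by (simp add: algebra_simps)
    finally have "\<Delta>*(1+\<tau>*c) < B*(1-2*\<tau>*c)*(1+\<tau>*c)" .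
    then show ?thesis using tc0 by (smt (verit) mult_le_cancel_right)
  qed
  obtain \<gamma> where g: "\<gamma> > 0" "4*\<tau>*c*exp(\<gamma>*\<tau>) + \<gamma> < P'" "(1+\<tau>*c)*exp(\<gamma>*\<tau>) < c"
      "\<Delta> < B*(exp(-\<gamma>*\<tau>) - 2*\<tau>*c)"
    using gamma_exists[OF tau0 c(2) eps(2)[folded P'_def] DB] by blast
  define b where "b = (\<lambda>t. B * exp (- \<gamma> * t))"
  have bpos: "\<And>t. b t > 0" unfolding b_def using Bpos by simp
  have bmono: "\<And>s t. s \<le> t \<Longrightarrow> b t \<le> b s" unfolding b_def using Bpos g(1) by simp
  have bshift: "\<And>t. b (t - \<tau>) = exp (\<gamma> * \<tau>) * b t" unfolding b_def
    by (simp add: algebra_simps flip: exp_add)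
  have b0: "b 0 = B" unfolding b_def by simp
  have bneg: "\<And>t. t \<le> 0 \<Longrightarrow> B \<le> b t" using bmono b0 by metis
  have eg1: "exp (- \<gamma> * \<tau>) \<le> 1" using g(1) tau0 by simp
  have BD: "\<Delta> < B"
  proof -
    have "B * (exp(-\<gamma>*\<tau>) - 2*\<tau>*c) \<le> B * 1" proof (rule mult_left_mono)
      show "exp(-\<gamma>*\<tau>) - 2*\<tau>*c \<le> 1" using eg1 tc0 by linarith
    qed (use Bpos in simp)
    then show ?thesis using g(4) by simp
  qed
  have key1: "(1+\<tau>*c) * b (t - \<tau>) < c * b t" for t
    using g(3) bpos[of t] unfolding bshift by (simp add: mult.assoc[symmetric])

  have xs: "continuous_on {0..} (\<lambda>t. x i (t - a))" if "i < N" "0 \<le> a" "a \<le> \<tau>" for i a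
    by (rule continuous_on_compose2[OF x_cont[OF that(1)]]) (use that in \<open>auto intro!: continuous_intros\<close>)
  have xs0: "continuous_on {0..} (x i)" if "i < N" for i
    by (rule continuous_on_subset[OF x_cont[OF that]]) (use tau0 in auto)
  have Fcont: "continuous_on {0..} (\<lambda>t. F j t)" if j: "j < N" for j
  proof -
    have "continuous_on {0..} (\<lambda>t. (\<psi> (norm (x j (t - \<sigma>) - x l (t - \<tau>))) / (real N - 1))
               *\<^sub>R (x l (t - \<tau>) - x j (t - \<sigma>)))" if l: "l \<in> {..<N} - {j}" for l
    proof -
      have cl: "continuous_on {0..} (\<lambda>t. x l (t - \<tau>))" using xs[of l \<tau>] l tau0 by auto
      have cj: "continuous_on {0..} (\<lambda>t. x j (t - \<sigma>))" using xs[of j \<sigma>] j st by auto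
      have "continuous_on {0..} (\<lambda>t. \<psi> (norm (x j (t - \<sigma>) - x l (t - \<tau>))))"
        by (rule continuous_on_compose2[OF psi_cont]) (auto intro!: continuous_intros cl cj)
      then show ?thesis using N1 by (intro continuous_intros cl cj) auto
    qed
    then show ?thesis unfolding F_def by (intro continuous_on_sum) auto
  qed
  have main: "\<forall>t\<ge>0. (\<forall>i<N. \<forall>k<N. norm (x i t - x k t) < b t) \<and> (\<forall>j<N. norm (F j t) < c * b t)"
  proof (rule ccontr)
    assume nm: "\<not> ?thesis"
    define S where "S = {t. 0 \<le> t \<and> ((\<exists>i<N. \<exists>k<N. b t \<le> norm (x i t - x k t)) \<or> (\<exists>j<N. c * b t \<le> norm (F j t)))}"
    have Sne: "S \<noteq> {}"
    proof -
      from nm obtain t where t: "t \<ge> 0" "\<not> ((\<forall>i<N. \<forall>k<N. norm (x i t - x k t) < b t) \<and> (\<forall>j<N. norm (F j t) < c * b t))"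
        by blast
      then have "t \<in> S" unfolding S_def by (auto simp: not_less)
      then show ?thesis by blast
    qed
    have Sbdd: "bdd_below S" unfolding S_def by (rule bdd_belowI[of _ 0]) auto
    have Sclosed: "closed S"
    proof -
      have "S = (\<Union>i\<in>{..<N}. \<Union>k\<in>{..<N}. {t \<in> {0..}. b t \<le> norm (x i t - x k t)})
              \<union> (\<Union>j\<in>{..<N}. {t \<in> {0..}. c * b t \<le> norm (F j t)})"
        unfolding S_def by auto
      moreover have "closed {t \<in> {0..}. b t \<le> norm (x i t - x k t)}" if "i < N" "k < N" for i k
        by (rule continuous_on_closed_Collect_le)
           (auto simp: b_def intro!: continuous_intros xs0 that)
      moreover have "closed {t \<in> {0..}. c * b t \<le> norm (F j t)}" if "j < N" for j
        by (rule continuous_on_closed_Collect_le)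
           (auto simp: b_def intro!: continuous_intros Fcont that)
      ultimately show ?thesis by (auto intro!: closed_UN closed_Un)
    qed
    define t0 where "t0 = Inf S"
    have t0S: "t0 \<in> S" using closed_contains_Inf[OF Sne Sbdd Sclosed] t0_def by simp
    have t00: "t0 \<ge> 0" using t0S S_def by simp
    have before: "s \<notin> S" if "s < t0" for s
      using cInf_lower[OF _ Sbdd, of s] that t0_def by fastforce
    have pre_x: "norm (x i s - x k s) < b s" if "0 \<le> s" "s < t0" "i < N" "k < N" for s i k
      using before[OF that(2)] that unfolding S_def by (auto simp: not_le)
    have pre_F: "norm (F j s) < c * b s" if "0 \<le> s" "s < t0" "j < N" for s j
      using before[OF that(2)] that unfolding S_def by (auto simp: not_le)
    have disp: "norm (x j r' - x j r) \<le> c * b r * (r' - r)"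
      if a: "j < N" "0 \<le> r" "r \<le> r'" "r' \<le> t0" for j r r'
    proof (rule mvt_bound[where f'="F j"])
      show "r \<le> r'" using a by simp
      show "continuous_on {r..r'} (x j)" by (rule continuous_on_subset[OF x_cont[OF a(1)]]) (use a tau0 in auto)
      show "(x j has_vector_derivative F j s) (at s)" if "r < s" "s < r'" for s
        using der[OF a(1)] that a by auto
      show "norm (F j s) \<le> c * b r" if "r < s" "s < r'" for s
      proof -
        have "norm (F j s) < c * b s" using pre_F[of s j] that a by auto
        also have "c * b s \<le> c * b r" using bmono[of r s] that c0 by (intro mult_left_mono) auto
        finally show ?thesis by simp
      qed
    qed
    have cross: "norm (x l (t - \<tau>) - x j (t - \<sigma>)) \<le> (1 + \<tau>*c) * b (t - \<tau>)"
      if a: "0 \<le> t" "t \<le> t0" "l < N" "j < N"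
        and hp: "0 \<le> t - \<tau> \<Longrightarrow> norm (x l (t - \<tau>) - x j (t - \<tau>)) \<le> b (t - \<tau>)" for t l j
    proof -
      consider (i) "0 \<le> t - \<tau>" | (ii) "t - \<tau> < 0" "0 \<le> t - \<sigma>" | (iii) "t - \<sigma> < 0" by linarith
      then show ?thesis
      proof cases
        case i
        have "norm (x j (t - \<tau>) - x j (t - \<sigma>)) \<le> c * b (t - \<tau>) * ((t - \<sigma>) - (t - \<tau>))"
          using disp[of j "t - \<tau>" "t - \<sigma>"] a i st by (simp add: norm_minus_commute)
        also have "\<dots> \<le> c * b (t - \<tau>) * \<tau>" using c0 bpos[of "t - \<tau>"] st
          by (intro mult_left_mono) auto
        finally have "norm (x l (t - \<tau>) - x j (t - \<sigma>)) \<le> b (t - \<tau>) + c * b (t - \<tau>) * \<tau>"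
          using hp[OF i] by (intro norm_diff_triangle_le)
        then show ?thesis by (simp add: algebra_simps)
      next
        case ii
        have h1: "norm (x l (t - \<tau>) - x j 0) \<le> \<Delta>" using hD a ii tau0 by simp
        have "norm (x j 0 - x j (t - \<sigma>)) \<le> c * b 0 * ((t - \<sigma>) - 0)"
          using disp[of j 0 "t - \<sigma>"] a ii st by (simp add: norm_minus_commute)
        also have "\<dots> \<le> c * B * \<tau>" unfolding b0 using c0 Bpos ii st
          by (intro mult_left_mono) auto
        finally have "norm (x l (t - \<tau>) - x j (t - \<sigma>)) \<le> \<Delta> + c * B * \<tau>"
          using h1 by (intro norm_diff_triangle_le)
        also have "\<dots> \<le> (1 + \<tau>*c) * B" using BD by (simp add: algebra_simps)
        also have "\<dots> \<le> (1 + \<tau>*c) * b (t - \<tau>)" using bneg[of "t - \<tau>"] ii tc0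
          by (intro mult_left_mono) auto
        finally show ?thesis .
      next
        case iii
        have "norm (x l (t - \<tau>) - x j (t - \<sigma>)) \<le> \<Delta>" using hD a iii st by simp
        also have "\<dots> \<le> 1 * B" using BD by simp
        also have "\<dots> \<le> (1 + \<tau>*c) * b (t - \<tau>)" using bneg[of "t - \<tau>"] iii tc0 st Bpos
          by (intro mult_mono) auto
        finally show ?thesis .
      qed
    qed

    have caseB: False if nA: "\<not> (\<exists>i<N. \<exists>k<N. b t0 \<le> norm (x i t0 - x k t0))"
      and jB: "j < N" "c * b t0 \<le> norm (F j t0)" for j
    proof -
      have "norm (F j t0) \<le> (1 + \<tau>*c) * b (t0 - \<tau>)"
      proof (rule Fbound[OF jB(1)])
        show "0 \<le> (1 + \<tau>*c) * b (t0 - \<tau>)" using tc0 bpos[of "t0 - \<tau>"] by simp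
        fix l assume l: "l < N"
        show "norm (x l (t0 - \<tau>) - x j (t0 - \<sigma>)) \<le> (1 + \<tau>*c) * b (t0 - \<tau>)"
        proof (rule cross[OF t00 order_refl l jB(1)])
          assume h: "0 \<le> t0 - \<tau>"
          show "norm (x l (t0 - \<tau>) - x j (t0 - \<tau>)) \<le> b (t0 - \<tau>)"
          proof (cases "\<tau> = 0")
            case True then show ?thesis using nA l jB(1) by (auto simp: not_le less_imp_le)
          next
            case False then show ?thesis using pre_x[of "t0 - \<tau>" l j] h tau0 l jB(1) by auto
          qed
        qed
      qed
      then show False using key1[of t0] jB(2) by simp
    qed
    have caseA1: False if ik: "i < N" "k < N" "b t0 \<le> norm (x i t0 - x k t0)" and tt: "t0 \<le> \<tau>" for i k
    proof -
      have di: "norm (x i t0 - x i 0) \<le> c * B * \<tau>"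
      proof -
        have "norm (x i t0 - x i 0) \<le> c * b 0 * (t0 - 0)" using disp[of i 0 t0] ik t00 by simp
        also have "\<dots> \<le> c * B * \<tau>" unfolding b0 using c0 Bpos tt by (intro mult_left_mono) auto
        finally show ?thesis .
      qed
      have dk: "norm (x k 0 - x k t0) \<le> c * B * \<tau>"
      proof -
        have "norm (x k t0 - x k 0) \<le> c * b 0 * (t0 - 0)" using disp[of k 0 t0] ik t00 by simp
        also have "\<dots> \<le> c * B * \<tau>" unfolding b0 using c0 Bpos tt by (intro mult_left_mono) auto
        finally show ?thesis by (simp add: norm_minus_commute)
      qed
      have d0: "norm (x i 0 - x k 0) \<le> \<Delta>" using hD ik tau0 by simp
      have "norm (x i t0 - x k 0) \<le> c * B * \<tau> + \<Delta>" using di d0 by (rule norm_diff_triangle_le)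
      then have "norm (x i t0 - x k t0) \<le> (c * B * \<tau> + \<Delta>) + c * B * \<tau>" using dk by (rule norm_diff_triangle_le)
      also have "\<dots> < B * exp (-\<gamma> * \<tau>)" using g(4) by (simp add: algebra_simps)
      also have "\<dots> = b \<tau>" unfolding b_def by simp
      also have "\<dots> \<le> b t0" using bmono tt by simp
      finally show False using ik(3) by simp
    qed
    have caseA2: False if ik0: "i0 < N" "k0 < N" "b t0 \<le> norm (x i0 t0 - x k0 t0)" and tt: "t0 > \<tau>" for i0 k0
    proof -
      have t0pos: "t0 > 0" using tt tau0 by simp
      have tmt: "0 \<le> t0 - \<tau>" "0 \<le> t0 - \<sigma>" using tt st by auto
      have clx: "norm (x l s - x j s) \<le> b s" if "0 \<le> s" "s \<le> t0" "l < N" "j < N" for s l j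
      proof -
        have cT: "closed {s \<in> {0..}. norm (x l s - x j s) \<le> b s}"
          by (rule continuous_on_closed_Collect_le)
             (auto simp: b_def intro!: continuous_intros xs0 that)
        have "{0..<t0} \<subseteq> {s \<in> {0..}. norm (x l s - x j s) \<le> b s}"
          using pre_x that by (auto intro: less_imp_le)
        then have "closure {0..<t0} \<subseteq> {s \<in> {0..}. norm (x l s - x j s) \<le> b s}"
          using cT by (rule closure_minimal)
        moreover have "closure {0..<t0} = {0..t0}" using t0pos by simp
        ultimately show ?thesis using that by auto
      qed
      define A where "A = {..<N} \<times> {..<N}"
      define f where "f = (\<lambda>p. norm (x (fst p) t0 - x (snd p) t0))"
      have finA: "finite (f ` A)" unfolding A_def by simp
      have "(0, 0) \<in> A" unfolding A_def using N by simp
      then have neA: "f ` A \<noteq> {}" by blast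
      obtain p where p: "p \<in> A" "f p = Max (f ` A)" using Max_in[OF finA neA] by auto
      define i where "i = fst p"
      define k where "k = snd p"
      have ik: "i < N" "k < N" using p unfolding A_def i_def k_def by auto
      define D where "D = norm (x i t0 - x k t0)"
      have Dmax: "norm (x p' t0 - x q t0) \<le> D" if "p' < N" "q < N" for p' q
      proof -
        have "f (p', q) \<le> Max (f ` A)" using Max_ge[OF finA] that unfolding A_def by auto
        then show ?thesis using p unfolding f_def D_def i_def k_def by simp
      qed
      have Db: "b t0 \<le> D" using ik0 Dmax[of i0 k0] by simp
      have Dpos: "D > 0" using Db bpos[of t0] by simp
      define v where "v = (1 / D) *\<^sub>R (x i t0 - x k t0)"
      have vn: "norm v = 1" unfolding v_def using Dpos D_def by simp
      have vD: "v \<bullet> (x i t0 - x k t0) = D"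
      proof -
        have "v \<bullet> (x i t0 - x k t0) = (1/D) * (norm (x i t0 - x k t0))\<^sup>2"
          unfolding v_def by (simp add: power2_norm_eq_inner)
        then show ?thesis using Dpos unfolding D_def by (simp add: power2_eq_square)
      qed
      have vle: "v \<bullet> w \<le> norm w" for w using norm_cauchy_schwarz[of v w] vn by simp
      define y where "y = (\<lambda>p. v \<bullet> x p t0)"
      have yi: "y p' - y i \<le> 0" if "p' < N" for p'
      proof -
        have "y p' - y i = v \<bullet> (x p' t0 - x k t0) - v \<bullet> (x i t0 - x k t0)"
          unfolding y_def by (simp add: inner_diff_right)
        also have "\<dots> \<le> D - D" using vle[of "x p' t0 - x k t0"] Dmax[of p' k] that ik vD by simp
        finally show ?thesis by simp
      qed
      have yk: "y k - y p' \<le> 0" if "p' < N" for p'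
      proof -
        have "y k - y p' = v \<bullet> (x i t0 - x p' t0) - v \<bullet> (x i t0 - x k t0)"
          unfolding y_def by (simp add: inner_diff_right)
        also have "\<dots> \<le> D - D" using vle[of "x i t0 - x p' t0"] Dmax[of i p'] that ik vD by simp
        finally show ?thesis by simp
      qed
      have yki: "y k - y i = - D" using vD unfolding y_def by (simp add: inner_diff_right)
      define E where "E = 2 * \<tau> * c * b (t0 - \<tau>)"
      have E0: "E \<ge> 0" unfolding E_def using tc0 bpos[of "t0 - \<tau>"] by simp
      have ntau: "norm (x p' t0 - x p' (t0 - \<tau>)) \<le> \<tau> * c * b (t0 - \<tau>)" if "p' < N" for p'
        using disp[of p' "t0 - \<tau>" t0] that tmt tau0 by (simp add: algebra_simps)
      have nsig: "norm (x p' t0 - x p' (t0 - \<sigma>)) \<le> \<tau> * c * b (t0 - \<tau>)" if "p' < N" for p'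
      proof -
        have "norm (x p' t0 - x p' (t0 - \<sigma>)) \<le> c * b (t0 - \<sigma>) * (t0 - (t0 - \<sigma>))"
          using disp[of p' "t0 - \<sigma>" t0] that tmt st by simp
        also have "\<dots> \<le> c * b (t0 - \<tau>) * \<tau>"
        proof (rule mult_mono)
          show "c * b (t0 - \<sigma>) \<le> c * b (t0 - \<tau>)" using st c0 bmono[of "t0 - \<tau>" "t0 - \<sigma>"]
            by (intro mult_left_mono) auto
          show "0 \<le> c * b (t0 - \<tau>)" using c0 bpos[of "t0 - \<tau>"] by simp
        qed (use st in auto)
        finally show ?thesis by (simp add: algebra_simps)
      qed
      have Rb: "(1 + \<tau>*c) * b (t0 - \<tau>) \<le> R + \<epsilon>"
      proof -
        have "(1 + \<tau>*c) * b (t0 - \<tau>) \<le> (1 + \<tau>*c) * B" using bmono[of 0 "t0 - \<tau>"] tmt tc0 b0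
          by (intro mult_left_mono) auto
        then show ?thesis using BR by (simp add: mult.commute)
      qed
      have apsi: "P' \<le> \<psi> (norm (x j (t0 - \<sigma>) - x l (t0 - \<tau>)))" if "l < N" "j < N" for l j
      proof -
        have "norm (x l (t0 - \<tau>) - x j (t0 - \<sigma>)) \<le> (1 + \<tau>*c) * b (t0 - \<tau>)"
        proof (rule cross[OF t00 order_refl that])
          show "norm (x l (t0 - \<tau>) - x j (t0 - \<tau>)) \<le> b (t0 - \<tau>)"
            using clx[of "t0 - \<tau>" l j] tmt that tau0 by auto
        qed
        then have "norm (x j (t0 - \<sigma>) - x l (t0 - \<tau>)) \<le> R + \<epsilon>" using Rb by (simp add: norm_minus_commute)
        then show ?thesis unfolding P'_def by (intro psi_mono) auto
      qed
      have "4*\<tau>*c*exp(\<gamma>*\<tau>) \<ge> 0" using tau0 c0 by simp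
      then have P'pos: "P' > 0" using g(1,2) by linarith
      have cardm: "real (card ({..<N} - {q})) = real N - 1" if "q < N" for q
        using that by (simp add: card_Diff_singleton of_nat_diff)
      have Fi: "v \<bullet> F i t0 \<le> (P' / (real N - 1)) * (\<Sum>p\<in>{..<N} - {i}. (y p - y i)) + E"
      proof -
        have "v \<bullet> F i t0 = (\<Sum>p\<in>{..<N} - {i}. (\<psi> (norm (x i (t0 - \<sigma>) - x p (t0 - \<tau>))) / (real N - 1))
             * (v \<bullet> (x p (t0 - \<tau>) - x i (t0 - \<sigma>))))"
          unfolding F_def by (simp add: inner_sum_right)
        also have "\<dots> \<le> (\<Sum>p\<in>{..<N} - {i}. (P' / (real N - 1)) * (y p - y i) + E / (real N - 1))"
        proof (rule sum_mono)
          fix q assume q: "q \<in> {..<N} - {i}"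
          then have qN: "q < N" by simp
          define a where "a = \<psi> (norm (x i (t0 - \<sigma>) - x q (t0 - \<tau>))) / (real N - 1)"
          have a1: "P' / (real N - 1) \<le> a" unfolding a_def using apsi[OF qN ik(1)] N1
            by (intro divide_right_mono) auto
          have a2: "a \<le> 1 / (real N - 1)" unfolding a_def using psi_le1 N1 by (intro divide_right_mono) auto
          have "0 \<le> P' / (real N - 1)" using P'pos N1 by simp
          then have a0: "0 \<le> a" using a1 by linarith
          have tb: "v \<bullet> (x q (t0 - \<tau>) - x i (t0 - \<sigma>)) \<le> (y q - y i) + E"
          proof -
            have "v \<bullet> (x q (t0 - \<tau>) - x i (t0 - \<sigma>)) = v \<bullet> (x q (t0 - \<tau>) - x q t0) + (y q - y i)
                 + v \<bullet> (x i t0 - x i (t0 - \<sigma>))" unfolding y_def by (simp add: inner_diff_right)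
            moreover have "v \<bullet> (x q (t0 - \<tau>) - x q t0) \<le> \<tau> * c * b (t0 - \<tau>)"
              using vle[of "x q (t0 - \<tau>) - x q t0"] ntau[OF qN] by (simp add: norm_minus_commute)
            moreover have "v \<bullet> (x i t0 - x i (t0 - \<sigma>)) \<le> \<tau> * c * b (t0 - \<tau>)"
              using vle[of "x i t0 - x i (t0 - \<sigma>)"] nsig[OF ik(1)] by simp
            ultimately show ?thesis unfolding E_def by simp
          qed
          have "a * (v \<bullet> (x q (t0 - \<tau>) - x i (t0 - \<sigma>))) \<le> a * ((y q - y i) + E)"
            using tb a0 by (rule mult_left_mono)
          also have "\<dots> = a * (y q - y i) + a * E" by (simp add: algebra_simps)
          also have "\<dots> \<le> (P' / (real N - 1)) * (y q - y i) + (1 / (real N - 1)) * E"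
            using mult_right_mono_neg[OF a1 yi[OF qN]] mult_right_mono[OF a2 E0] by linarith
          finally show "\<psi> (norm (x i (t0 - \<sigma>) - x q (t0 - \<tau>))) / (real N - 1) * (v \<bullet> (x q (t0 - \<tau>) - x i (t0 - \<sigma>)))
              \<le> P' / (real N - 1) * (y q - y i) + E / (real N - 1)" unfolding a_def by simp
        qed
        also have "\<dots> = (P' / (real N - 1)) * (\<Sum>p\<in>{..<N} - {i}. (y p - y i)) + E"
          using cardm[OF ik(1)] N1 by (simp add: sum.distrib sum_distrib_left)
        finally show ?thesis .
      qed
      have Fk: "- (v \<bullet> F k t0) \<le> (P' / (real N - 1)) * (\<Sum>p\<in>{..<N} - {k}. (y k - y p)) + E"
      proof -
        have "- (v \<bullet> F k t0) = (\<Sum>p\<in>{..<N} - {k}. (\<psi> (norm (x k (t0 - \<sigma>) - x p (t0 - \<tau>))) / (real N - 1))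
             * (- (v \<bullet> (x p (t0 - \<tau>) - x k (t0 - \<sigma>)))))"
          unfolding F_def by (simp add: inner_sum_right sum_negf[symmetric])
        also have "\<dots> \<le> (\<Sum>p\<in>{..<N} - {k}. (P' / (real N - 1)) * (y k - y p) + E / (real N - 1))"
        proof (rule sum_mono)
          fix q assume q: "q \<in> {..<N} - {k}"
          then have qN: "q < N" by simp
          define a where "a = \<psi> (norm (x k (t0 - \<sigma>) - x q (t0 - \<tau>))) / (real N - 1)"
          have a1: "P' / (real N - 1) \<le> a" unfolding a_def using apsi[OF qN ik(2)] N1
            by (intro divide_right_mono) auto
          have a2: "a \<le> 1 / (real N - 1)" unfolding a_def using psi_le1 N1 by (intro divide_right_mono) auto
          have "0 \<le> P' / (real N - 1)" using P'pos N1 by simp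
          then have a0: "0 \<le> a" using a1 by linarith
          have tb: "- (v \<bullet> (x q (t0 - \<tau>) - x k (t0 - \<sigma>))) \<le> (y k - y q) + E"
          proof -
            have "- (v \<bullet> (x q (t0 - \<tau>) - x k (t0 - \<sigma>))) = v \<bullet> (x q t0 - x q (t0 - \<tau>)) + (y k - y q)
                 + v \<bullet> (x k (t0 - \<sigma>) - x k t0)" unfolding y_def by (simp add: inner_diff_right)
            moreover have "v \<bullet> (x q t0 - x q (t0 - \<tau>)) \<le> \<tau> * c * b (t0 - \<tau>)"
              using vle[of "x q t0 - x q (t0 - \<tau>)"] ntau[OF qN] by simp
            moreover have "v \<bullet> (x k (t0 - \<sigma>) - x k t0) \<le> \<tau> * c * b (t0 - \<tau>)"
              using vle[of "x k (t0 - \<sigma>) - x k t0"] nsig[OF ik(2)] by (simp add: norm_minus_commute)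
            ultimately show ?thesis unfolding E_def by simp
          qed
          have "a * (- (v \<bullet> (x q (t0 - \<tau>) - x k (t0 - \<sigma>)))) \<le> a * ((y k - y q) + E)"
            using tb a0 by (rule mult_left_mono)
          also have "\<dots> = a * (y k - y q) + a * E" by (simp add: algebra_simps)
          also have "\<dots> \<le> (P' / (real N - 1)) * (y k - y q) + (1 / (real N - 1)) * E"
            using mult_right_mono_neg[OF a1 yk[OF qN]] mult_right_mono[OF a2 E0] by linarith
          finally show "\<psi> (norm (x k (t0 - \<sigma>) - x q (t0 - \<tau>))) / (real N - 1) * (- (v \<bullet> (x q (t0 - \<tau>) - x k (t0 - \<sigma>))))
              \<le> P' / (real N - 1) * (y k - y q) + E / (real N - 1)" unfolding a_def by simp
        qed
        also have "\<dots> = (P' / (real N - 1)) * (\<Sum>p\<in>{..<N} - {k}. (y k - y p)) + E"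
          using cardm[OF ik(2)] N1 by (simp add: sum.distrib sum_distrib_left)
        finally show ?thesis .
      qed
      have s1: "(\<Sum>p\<in>{..<N} - {i}. (y p - y i)) = (\<Sum>p<N. (y p - y i))"
        using ik by (simp add: sum_diff1)
      have s2: "(\<Sum>p\<in>{..<N} - {k}. (y k - y p)) = (\<Sum>p<N. (y k - y p))"
        using ik by (simp add: sum_diff1)
      have s3: "(\<Sum>p<N. (y p - y i)) + (\<Sum>p<N. (y k - y p)) = real N * (- D)"
      proof -
        have "(\<Sum>p<N. (y p - y i)) + (\<Sum>p<N. (y k - y p)) = (\<Sum>p<N. (y k - y i))"
          by (simp add: sum.distrib[symmetric] algebra_simps)
        then show ?thesis using yki by simp
      qed
      have dv: "v \<bullet> F i t0 - v \<bullet> F k t0 \<le> (P' / (real N - 1)) * (real N * (- D)) + 2 * E"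
      proof -
        let ?c = "P' / (real N - 1)"
        let ?S1 = "\<Sum>p<N. (y p - y i)" and ?S2 = "\<Sum>p<N. (y k - y p)"
        have "?c * ?S1 + ?c * ?S2 = ?c * (?S1 + ?S2)" by (rule distrib_left[symmetric])
        also have "\<dots> = ?c * (real N * (- D))" by (simp only: s3)
        finally have "?c * ?S1 + ?c * ?S2 = ?c * (real N * (- D))" .
        then show ?thesis using Fi Fk unfolding s1 s2 by linarith
      qed
      have "(P' / (real N - 1)) * (real N * D) - P' * D = P' * D / (real N - 1)"
        using N1 by (simp add: field_simps)
      moreover have "P' * D / (real N - 1) \<ge> 0" using P'pos Dpos N1 by simp
      ultimately have "(P' / (real N - 1)) * (real N * (- D)) \<le> - P' * D" by simp
      also have "- P' * D \<le> - P' * b t0" using Db P'pos by simp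
      finally have dv2: "v \<bullet> F i t0 - v \<bullet> F k t0 \<le> - P' * b t0 + 4 * \<tau> * c * exp (\<gamma> * \<tau>) * b t0"
        using dv unfolding E_def bshift by (simp add: algebra_simps)
      have "(- P' + 4 * \<tau> * c * exp (\<gamma> * \<tau>)) * b t0 < (- \<gamma>) * b t0"
        using g(2) bpos[of t0] by (intro mult_strict_right_mono) auto
      then have dneg: "v \<bullet> (F i t0 - F k t0) + \<gamma> * b t0 < 0" using dv2
        by (simp add: inner_diff_right algebra_simps)
      define G where "G = (\<lambda>s. v \<bullet> (x i s - x k s) - b s)"
      have dG: "(G has_real_derivative (v \<bullet> (F i t0 - F k t0) + \<gamma> * b t0)) (at t0)"
      proof -
        have "((\<lambda>s. x i s - x k s) has_vector_derivative (F i t0 - F k t0)) (at t0)"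
          using der[OF ik(1) t0pos] der[OF ik(2) t0pos] by (rule has_vector_derivative_diff)
        then have "((\<lambda>s. v \<bullet> (x i s - x k s)) has_derivative (\<lambda>h. v \<bullet> (h *\<^sub>R (F i t0 - F k t0)))) (at t0)"
          unfolding has_vector_derivative_def by (rule has_derivative_inner_right)
        moreover have "(\<lambda>h. v \<bullet> (h *\<^sub>R (F i t0 - F k t0))) = (\<lambda>h. h *\<^sub>R (v \<bullet> (F i t0 - F k t0)))"
          by (simp add: fun_eq_iff)
        ultimately have d1: "((\<lambda>s. v \<bullet> (x i s - x k s)) has_real_derivative (v \<bullet> (F i t0 - F k t0))) (at t0)"
          unfolding has_real_derivative_iff_has_vector_derivative has_vector_derivative_def by simp
        have d2: "(b has_real_derivative (- \<gamma> * b t0)) (at t0)"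
          unfolding b_def by (auto intro!: derivative_eq_intros)
        show ?thesis using DERIV_diff[OF d1 d2] unfolding G_def by simp
      qed
      obtain d where d: "d > 0" "\<And>h. h > 0 \<Longrightarrow> h < d \<Longrightarrow> G t0 < G (t0 - h)"
        using DERIV_neg_dec_left[OF dG dneg] by blast
      define h where "h = min d t0 / 2"
      have h: "h > 0" "h < d" "h < t0" unfolding h_def using d(1) t0pos by auto
      have "G (t0 - h) < 0"
      proof -
        have "v \<bullet> (x i (t0 - h) - x k (t0 - h)) \<le> norm (x i (t0 - h) - x k (t0 - h))" by (rule vle)
        also have "\<dots> < b (t0 - h)" using pre_x[of "t0 - h" i k] h ik by auto
        finally show ?thesis unfolding G_def by simp
      qed
      moreover have "G t0 \<ge> 0" unfolding G_def using vD Db by simp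
      ultimately show False using d(2)[OF h(1,2)] by simp
    qed
    have caseA: False if exA: "\<exists>i<N. \<exists>k<N. b t0 \<le> norm (x i t0 - x k t0)"
    proof -
      obtain i k where "i < N" "k < N" "b t0 \<le> norm (x i t0 - x k t0)" using exA by blast
      then show False using caseA1 caseA2 by (cases "t0 \<le> \<tau>") (auto simp: not_le)
    qed
    from t0S have "(\<exists>i<N. \<exists>k<N. b t0 \<le> norm (x i t0 - x k t0)) \<or> (\<exists>j<N. c * b t0 \<le> norm (F j t0))"
      unfolding S_def by simp
    then show False
    proof
      assume "\<exists>j<N. c * b t0 \<le> norm (F j t0)"
      then obtain j where "j < N" "c * b t0 \<le> norm (F j t0)" by blast
      then show False using caseA caseB by blast
    qed (use caseA in blast)
  qed
  have diam_lt: "diam N x t < b t" "0 \<le> diam N x t" if t: "t \<ge> 0" for t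
  proof -
    have eq: "{norm (x i t - x j t) | i j. i < N \<and> j < N} = (\<lambda>p. norm (x (fst p) t - x (snd p) t)) ` ({..<N} \<times> {..<N})"
      by force
    have fin: "finite {norm (x i t - x j t) | i j. i < N \<and> j < N}" unfolding eq by simp
    have ne: "{norm (x i t - x j t) | i j. i < N \<and> j < N} \<noteq> {}" using N by force
    obtain i j where ij: "i < N" "j < N" "diam N x t = norm (x i t - x j t)"
      using Max_in[OF fin ne] unfolding diam_def by blast
    show "diam N x t < b t" using ij main t by simp
    have N0: "0 < N" using N by simp
    have "norm (x 0 t - x 0 t) \<in> {norm (x i t - x j t) | i j. i < N \<and> j < N}" using N0 by blast
    then have "norm (x 0 t - x 0 t) \<le> diam N x t" unfolding diam_def using Max_ge[OF fin] by blast
    then show "0 \<le> diam N x t" by simp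
  qed
  show ?thesis
  proof
    have lim: "((\<lambda>t. B * exp (- \<gamma> * t)) \<longlongrightarrow> 0) at_top" using g(1) by real_asymp
    show "(diam N x \<longlongrightarrow> 0) at_top"
    proof (rule tendsto_sandwich[OF _ _ tendsto_const lim])
      show "eventually (\<lambda>t. 0 \<le> diam N x t) at_top" using diam_lt(2)
        by (intro eventually_at_top_linorderI[of 0]) auto
      show "eventually (\<lambda>t. diam N x t \<le> B * exp (- \<gamma> * t)) at_top" using diam_lt(1)
        by (intro eventually_at_top_linorderI[of 0]) (auto simp: b_def less_imp_le)
    qed
    show "\<exists>A \<Gamma>. A > 0 \<and> \<Gamma> > 0 \<and> (\<forall>t\<ge>0. diam N x t \<le> A * exp (- \<Gamma> * t))"
      using Bpos g(1) diam_lt(1) unfolding b_def by (intro exI[of _ B] exI[of _ \<gamma>]) (auto simp: less_imp_le)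
  qed
qed


end
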